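(* Let $K$ be an algebraically closed field with a non-trivial non-Archimedean valuation with dense value group, and a fixed splitting $\gamma\mapsto t^\gamma$. Let $\alpha=(\alpha_1,\dots,\alpha_6)\in(K^* )^6$ have distinct entries and $\omega_k=-\operatorname{val}(\alpha_k)$. Let $\omega$ be a value attained by at least two of the $\omega_k$, and set $\beta=\max\{\operatorname{val}(\alpha_m-\alpha_l):\omega_m=\omega_l=\omega,\ m\ne l\}$ (so $\beta\ge-\omega$). Fix indices $i\neq j$ with $\omega_i=\omega_j=\omega$ and $\operatorname{val}(\alpha_i-\alpha_j)=\beta$. Let $\zeta\in K$ with $\operatorname{val}(\zeta)=0$ be such that $\operatorname{in}(\alpha_i-\alpha_j)=\overline{\zeta}\in\widetilde K$, and choose $\gamma\in\operatorname{val}(K^* )$ with $\beta<\gamma<\operatorname{val}(\alpha_i-\alpha_j-\zeta t^\beta)$. Let $\psi\colon\mathbb{P}^1\to\mathbb{P}^1$ be the linear change of coordinates $\psi(x)=x-\alpha_j-\zeta t^\beta-t^\gamma$ and $\alpha'_s=\psi(\alpha_s)$. Then $\alpha'\in(K^* )^6$ and $\omega'_s=-\operatorname{val}(\alpha'_s)$ satisfy: (1) if $\omega_s>\omega_i$ then $\omega'_s=\omega_s$; (2) if $\omega_s<\omega_i$ then $\omega'_s=\omega_i$ and $\operatorname{in}(\alpha'_s)=-\operatorname{in}(\alpha_i)$; (3) if $\omega_s=\omega_i$ and $s\ne i$ then $\omega'_i=-\gamma<\omega'_s=-\operatorname{val}(\alpha_s-\alpha_i)\le\omega_i$.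
   Context: For $a\in K^*$, $\operatorname{in}(a)$ denotes the class of $a\,t^{-\operatorname{val}(a)}$ in the residue field $\widetilde K$. *)

theory Defs
  imports "HOL-Computational_Algebra.Polynomial"
begin

text \<open>A field K (type 'a) with a real-valued non-Archimedean valuation val,
  meaningful on nonzero elements only (val 0 is irrelevant and never used),
  and a splitting tp of the value group: tp g plays the role of t^g.\<close>

definition value_group :: "('a::field \<Rightarrow> real) \<Rightarrow> real set" where
  "value_group val = val ` (UNIV - {0})"

definition is_valuation :: "('a::field \<Rightarrow> real) \<Rightarrow> bool" where
  "is_valuation val \<longleftrightarrow>
     (\<forall>x y. x \<noteq> 0 \<longrightarrow> y \<noteq> 0 \<longrightarrow> val (x * y) = val x + val y) \<and>
     (\<forall>x y. x \<noteq> 0 \<longrightarrow> y \<noteq> 0 \<longrightarrow> x + y \<noteq> 0 \<longrightarrow> val (x + y) \<ge> min (val x) (val y))"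

definition alg_closed :: "'a::field itself \<Rightarrow> bool" where
  "alg_closed _ \<longleftrightarrow> (\<forall>p :: 'a poly. degree p > 0 \<longrightarrow> (\<exists>x. poly p x = 0))"

definition is_splitting :: "('a::field \<Rightarrow> real) \<Rightarrow> (real \<Rightarrow> 'a) \<Rightarrow> bool" where
  "is_splitting val tp \<longleftrightarrow>
     (\<forall>g\<in>value_group val. tp g \<noteq> 0 \<and> val (tp g) = g) \<and>
     (\<forall>g\<in>value_group val. \<forall>h\<in>value_group val. tp (g + h) = tp g * tp h)"

definition valued_setting :: "('a::field \<Rightarrow> real) \<Rightarrow> (real \<Rightarrow> 'a) \<Rightarrow> bool" where
  "valued_setting val tp \<longleftrightarrow>
     alg_closed TYPE('a) \<and> is_valuation val \<and>
     value_group val \<noteq> {0} \<and>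
     (\<forall>x y. x < y \<longrightarrow> (\<exists>g\<in>value_group val. x < g \<and> g < y)) \<and>
     is_splitting val tp"

text \<open>Residue field = O / m; an element of the residue field is represented as
  the equivalence class (a subset of the valuation ring O) of x in O.\<close>
definition resid :: "('a::field \<Rightarrow> real) \<Rightarrow> 'a \<Rightarrow> 'a set" where
  "resid val x = {y. (y = 0 \<or> val y \<ge> 0) \<and> (y = x \<or> val (y - x) > 0)}"

definition initial :: "('a::field \<Rightarrow> real) \<Rightarrow> (real \<Rightarrow> 'a) \<Rightarrow> 'a \<Rightarrow> 'a set" where
  "initial val tp a = resid val (a * tp (- val a))"

end

theory Submission
  imports Defs
begin

lemma vone: assumes "is_valuation val" shows "val (1::'a::field) = 0"
proof -
  have H: "\<forall>x y. x \<noteq> 0 \<longrightarrow> y \<noteq> 0 \<longrightarrow> val (x * y) = val x + val (y::'a)"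
    using assms unfolding is_valuation_def by auto
  have "val ((1::'a) * 1) = val 1 + val 1" by (rule H[rule_format]) simp_all
  then show ?thesis by simp
qed

lemma vneg: assumes V: "is_valuation val" and x: "(x::'a::field) \<noteq> 0" shows "val (- x) = val x"
proof -
  have H: "\<forall>x y. x \<noteq> 0 \<longrightarrow> y \<noteq> 0 \<longrightarrow> val (x * y) = val x + val (y::'a)"
    using V unfolding is_valuation_def by auto
  have "val ((-1::'a) * (-1)) = val (-1) + val (-1)" by (rule H[rule_format]) simp_all
  hence m: "val (-1::'a) = 0" using vone[OF V] by simp
  have "val ((-1) * x) = val (-1) + val x" by (rule H[rule_format]) (simp_all add: x)
  thus ?thesis using m by simp
qed

lemma vmul: assumes "is_valuation val" "(x::'a::field) \<noteq> 0" "y \<noteq> 0"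
  shows "val (x * y) = val x + val y"
  using assms unfolding is_valuation_def by auto

lemma vinv: assumes V: "is_valuation val" and x: "(x::'a::field) \<noteq> 0"
  shows "val (inverse x) = - val x"
proof -
  have "val (x * inverse x) = val x + val (inverse x)" by (rule vmul[OF V x]) (simp add: x)
  thus ?thesis using vone[OF V] x by simp
qed

lemma vult: assumes "is_valuation val" "(x::'a::field) \<noteq> 0" "y \<noteq> 0" "x + y \<noteq> 0"
  shows "val (x + y) \<ge> min (val x) (val y)"
  using assms unfolding is_valuation_def by auto

lemma vstrict: assumes V: "is_valuation val" and x: "(x::'a::field) \<noteq> 0"
  and y: "y = 0 \<or> val x < val y"
  shows "x + y \<noteq> 0 \<and> val (x + y) = val x"
proof (cases "y = 0")
  case True thus ?thesis using x by simp
next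
  case False
  hence lt: "val x < val y" using y by simp
  have nz: "x + y \<noteq> 0"
  proof
    assume "x + y = 0" hence "y = - x" using add.commute eq_neg_iff_add_eq_0 by metis
    thus False using vneg[OF V x] lt by simp
  qed
  have ge: "val (x + y) \<ge> val x" using vult[OF V x False nz] lt by simp
  have "\<not> val (x + y) > val x"
  proof
    assume g: "val (x + y) > val x"
    have "val ((x + y) + (- y)) \<ge> min (val (x + y)) (val (- y))"
      by (rule vult[OF V nz]) (use False x in simp_all)
    thus False using g lt vneg[OF V False] by simp
  qed
  thus ?thesis using nz ge by simp
qed

definition small :: "('a::field \<Rightarrow> real) \<Rightarrow> 'a \<Rightarrow> real \<Rightarrow> bool" where
  "small val d r \<longleftrightarrow> d = 0 \<or> val d > r"

lemma small_add: assumes V: "is_valuation val" "small val a r" "small val b r"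
  shows "small val (a + b) r"
proof (cases "a = 0 \<or> b = 0 \<or> a + b = 0")
  case True thus ?thesis using assms unfolding small_def by auto
next
  case False
  hence "val (a + b) \<ge> min (val a) (val b)" using vult[OF V(1), of a b] by auto
  moreover have "val a > r" "val b > r" using assms False unfolding small_def by auto
  ultimately show ?thesis unfolding small_def by linarith
qed

lemma small_neg: assumes V: "is_valuation val" "small val a r"
  shows "small val (- a) r"
proof (cases "a = 0")
  case True thus ?thesis unfolding small_def by simp
next
  case False thus ?thesis using assms vneg[OF V(1) False] unfolding small_def by simp
qed

lemma resid_eq: assumes V: "is_valuation val" and s: "small val (A - B) 0"
  shows "resid val A = resid val B"
proof -
  have "\<And>A B y. small val (A - B) 0 \<Longrightarrow> (y = A \<or> val (y - A) > 0) \<Longrightarrow> (y = B \<or> val (y - B) > 0)"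
  proof -
    fix A B y assume a: "small val (A - (B::'a)) 0" and b: "y = A \<or> val (y - A) > 0"
    have "small val (y - A) 0" using b unfolding small_def by auto
    hence "small val ((y - A) + (A - B)) 0" using small_add[OF V _ a] by blast
    thus "y = B \<or> val (y - B) > 0" unfolding small_def by auto
  qed
  moreover have "small val (B - A) 0" using small_neg[OF V s] by simp
  ultimately show ?thesis unfolding resid_def using s by blast
qed

theorem lemma5p3:
  fixes val :: "'a::field \<Rightarrow> real" and tp :: "real \<Rightarrow> 'a"
    and \<alpha> :: "nat \<Rightarrow> 'a" and i j :: nat and \<beta> \<gamma> :: real and \<zeta> :: 'a
  assumes setting: "valued_setting val tp"
    and nonzero: "\<forall>k<6. \<alpha> k \<noteq> 0"
    and distinct: "inj_on \<alpha> {..<6}"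
    and ij: "i < 6" "j < 6" "i \<noteq> j" "- val (\<alpha> i) = - val (\<alpha> j)"
    and beta_def: "\<beta> = Max {val (\<alpha> m - \<alpha> l) | m l. m < 6 \<and> l < 6 \<and> m \<noteq> l \<and>
                        - val (\<alpha> m) = - val (\<alpha> i) \<and> - val (\<alpha> l) = - val (\<alpha> i)}"
    and beta_att: "val (\<alpha> i - \<alpha> j) = \<beta>"
    and zeta: "\<zeta> \<noteq> 0" "val \<zeta> = 0" "initial val tp (\<alpha> i - \<alpha> j) = resid val \<zeta>"
    and gamma: "\<gamma> \<in> value_group val" "\<beta> < \<gamma>"
      "\<alpha> i - \<alpha> j - \<zeta> * tp \<beta> = 0 \<or> \<gamma> < val (\<alpha> i - \<alpha> j - \<zeta> * tp \<beta>)"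
  shows "let \<alpha>' = (\<lambda>s. \<alpha> s - \<alpha> j - \<zeta> * tp \<beta> - tp \<gamma>) in
     (\<forall>s<6. \<alpha>' s \<noteq> 0) \<and>
     (\<forall>s<6. - val (\<alpha> s) > - val (\<alpha> i) \<longrightarrow> - val (\<alpha>' s) = - val (\<alpha> s)) \<and>
     (\<forall>s<6. - val (\<alpha> s) < - val (\<alpha> i) \<longrightarrow>
         - val (\<alpha>' s) = - val (\<alpha> i) \<and>
         initial val tp (\<alpha>' s) = resid val (- (\<alpha> i * tp (- val (\<alpha> i))))) \<and>
     (\<forall>s<6. - val (\<alpha> s) = - val (\<alpha> i) \<and> s \<noteq> i \<longrightarrow>
         - val (\<alpha>' i) = - \<gamma> \<and> - \<gamma> < - val (\<alpha>' s) \<and>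
         - val (\<alpha>' s) = - val (\<alpha> s - \<alpha> i) \<and> - val (\<alpha> s - \<alpha> i) \<le> - val (\<alpha> i))"
proof -
  have V: "is_valuation val" and S: "is_splitting val tp" using setting unfolding valued_setting_def by auto
  have ai: "\<alpha> i \<noteq> 0" and aj: "\<alpha> j \<noteq> 0" using nonzero ij by auto
  have dij: "\<alpha> i - \<alpha> j \<noteq> 0" using distinct ij by (auto simp: inj_on_def)
  have bvg: "\<beta> \<in> value_group val" using dij beta_att unfolding value_group_def by force
  have tpb: "tp \<beta> \<noteq> 0" "val (tp \<beta>) = \<beta>" using S bvg unfolding is_splitting_def by auto
  have tpg: "tp \<gamma> \<noteq> 0" "val (tp \<gamma>) = \<gamma>" using S gamma(1) unfolding is_splitting_def by auto
  define d where "d = \<alpha> i - \<alpha> j - \<zeta> * tp \<beta>"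
  define a' where "a' = (\<lambda>s. \<alpha> s - \<alpha> j - \<zeta> * tp \<beta> - tp \<gamma>)"
  have ai': "a' i = - tp \<gamma> + d" unfolding a'_def d_def by simp
  have dsm: "d = 0 \<or> val (- tp \<gamma>) < val d" using gamma(3) vneg[OF V tpg(1)] tpg unfolding d_def by auto
  have ai'v: "a' i \<noteq> 0" "val (a' i) = \<gamma>"
    using vstrict[OF V _ dsm] tpg vneg[OF V tpg(1)] ai' by auto
  have vaij: "val (\<alpha> j) = val (\<alpha> i)" using ij by simp
  have bge: "\<beta> \<ge> val (\<alpha> i)"
    using vult[OF V ai, of "- \<alpha> j"] aj dij vneg[OF V aj] vaij beta_att by simp
  have as': "\<And>s. a' s = \<alpha> s + (- \<alpha> i + a' i)" unfolding a'_def by simp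
  have c: "- \<alpha> i + a' i \<noteq> 0 \<and> val (- \<alpha> i + a' i) = val (\<alpha> i)"
    using vstrict[OF V, of "- \<alpha> i" "a' i"] ai vneg[OF V ai] ai'v bge gamma(2) by auto
  have part1: "\<forall>s<6. a' s \<noteq> 0 \<and> (val (\<alpha> s) < val (\<alpha> i) \<longrightarrow> val (a' s) = val (\<alpha> s))"
  proof (intro allI impI conjI)
    fix s :: nat assume s: "s < 6"
    have as: "\<alpha> s \<noteq> 0" using s nonzero by auto
    show "val (\<alpha> s) < val (\<alpha> i) \<Longrightarrow> val (a' s) = val (\<alpha> s)"
    proof -
      assume lt: "val (\<alpha> s) < val (\<alpha> i)"
      have "\<alpha> s + (- \<alpha> i + a' i) \<noteq> 0 \<and> val (\<alpha> s + (- \<alpha> i + a' i)) = val (\<alpha> s)"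
        by (rule vstrict[OF V as]) (use c lt in simp)
      thus ?thesis using as'[of s] by simp
    qed
    show "a' s \<noteq> 0"
    proof (cases "s = i")
      case True thus ?thesis using ai'v by simp
    next
      case False
      have "\<alpha> s - \<alpha> i \<noteq> 0" using distinct s ij False by (auto simp: inj_on_def)
      consider "val (\<alpha> s) < val (\<alpha> i)" | "val (\<alpha> s) > val (\<alpha> i)" | "val (\<alpha> s) = val (\<alpha> i)" by linarith
      thus ?thesis
      proof cases
        case 1
        have "\<alpha> s + (- \<alpha> i + a' i) \<noteq> 0 \<and> val (\<alpha> s + (- \<alpha> i + a' i)) = val (\<alpha> s)"
          by (rule vstrict[OF V as]) (use c 1 in simp)
        thus ?thesis using as'[of s] by simp
      next
        case 2
        have "(- \<alpha> i + a' i) + \<alpha> s \<noteq> 0 \<and> val ((- \<alpha> i + a' i) + \<alpha> s) = val (- \<alpha> i + a' i)"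
          by (rule vstrict[OF V]) (use c 2 in simp_all)
        thus ?thesis using as'[of s] by (simp add: add.commute)
      next
        case 3
        have ne: "\<alpha> s - \<alpha> i \<noteq> 0" by fact
        have fin: "finite {val (\<alpha> m - \<alpha> l) | m l. m < 6 \<and> l < 6 \<and> m \<noteq> l \<and>
                        - val (\<alpha> m) = - val (\<alpha> i) \<and> - val (\<alpha> l) = - val (\<alpha> i)}"
          by (rule finite_subset[of _ "(\<lambda>(m,l). val (\<alpha> m - \<alpha> l)) ` ({..<6::nat} \<times> {..<6::nat})"]) auto
        have "val (\<alpha> s - \<alpha> i) \<le> \<beta>" unfolding beta_def
          by (rule Max_ge[OF fin], intro CollectI exI[of _ s] exI[of _ i]) (use s ij False 3 in auto)
        hence "\<alpha> s - \<alpha> i + a' i \<noteq> 0" using vstrict[OF V ne, of "a' i"] ai'v gamma(2) by auto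
        thus ?thesis unfolding a'_def by (simp add: algebra_simps)
      qed
    qed
  qed
  have part3: "\<forall>s<6. - val (\<alpha> s) < - val (\<alpha> i) \<longrightarrow>
         - val (a' s) = - val (\<alpha> i) \<and>
         initial val tp (a' s) = resid val (- (\<alpha> i * tp (- val (\<alpha> i))))"
  proof (intro allI impI)
    fix s :: nat assume s: "s < 6" and lt: "- val (\<alpha> s) < - val (\<alpha> i)"
    have as: "\<alpha> s \<noteq> 0" using s nonzero by auto
    have "(- \<alpha> i + a' i) + \<alpha> s \<noteq> 0 \<and> val ((- \<alpha> i + a' i) + \<alpha> s) = val (- \<alpha> i + a' i)"
      by (rule vstrict[OF V]) (use c lt in simp_all)
    hence eqv: "val (a' s) = val (\<alpha> i)" using as'[of s] c by (simp add: add.commute)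
    define T where "T = tp (- val (\<alpha> i))"
    have mvg: "- val (\<alpha> i) \<in> value_group val" unfolding value_group_def
      using vinv[OF V ai] ai by (metis DiffI UNIV_I image_eqI inverse_nonzero_iff_nonzero singletonD)
    have T: "T \<noteq> 0" "val T = - val (\<alpha> i)" using S mvg unfolding is_splitting_def T_def by auto
    have sm1: "small val (\<alpha> s) (val (\<alpha> i))" using lt unfolding small_def by simp
    have sm2: "small val (a' i) (val (\<alpha> i))" using ai'v bge gamma(2) unfolding small_def by simp
    have sm: "small val (\<alpha> s + a' i) (val (\<alpha> i))" using small_add[OF V sm1 sm2] .
    have diff: "a' s * T - (- (\<alpha> i * T)) = (\<alpha> s + a' i) * T" unfolding as'[of s] by (simp add: algebra_simps)
    have "small val ((\<alpha> s + a' i) * T) 0"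
    proof (cases "\<alpha> s + a' i = 0")
      case True thus ?thesis unfolding small_def by simp
    next
      case False thus ?thesis using sm vmul[OF V False T(1)] T unfolding small_def by simp
    qed
    hence "resid val (a' s * T) = resid val (- (\<alpha> i * T))" using resid_eq[OF V] diff by metis
    thus "- val (a' s) = - val (\<alpha> i) \<and>
         initial val tp (a' s) = resid val (- (\<alpha> i * tp (- val (\<alpha> i))))"
      unfolding initial_def using eqv T_def by simp
  qed
  have part4: "\<forall>s<6. - val (\<alpha> s) = - val (\<alpha> i) \<and> s \<noteq> i \<longrightarrow>
         - val (a' i) = - \<gamma> \<and> - \<gamma> < - val (a' s) \<and>
         - val (a' s) = - val (\<alpha> s - \<alpha> i) \<and> - val (\<alpha> s - \<alpha> i) \<le> - val (\<alpha> i)"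
  proof (intro allI impI)
    fix s :: nat assume s: "s < 6" and h: "- val (\<alpha> s) = - val (\<alpha> i) \<and> s \<noteq> i"
    have as: "\<alpha> s \<noteq> 0" using s nonzero by auto
    have ne: "\<alpha> s - \<alpha> i \<noteq> 0" using distinct s ij h by (auto simp: inj_on_def)
    have fin: "finite {val (\<alpha> m - \<alpha> l) | m l. m < 6 \<and> l < 6 \<and> m \<noteq> l \<and>
                    - val (\<alpha> m) = - val (\<alpha> i) \<and> - val (\<alpha> l) = - val (\<alpha> i)}"
      by (rule finite_subset[of _ "(\<lambda>(m,l). val (\<alpha> m - \<alpha> l)) ` ({..<6::nat} \<times> {..<6::nat})"]) auto
    have le: "val (\<alpha> s - \<alpha> i) \<le> \<beta>" unfolding beta_def
      by (rule Max_ge[OF fin], intro CollectI exI[of _ s] exI[of _ i]) (use s ij h in auto)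
    have st: "\<alpha> s - \<alpha> i + a' i \<noteq> 0 \<and> val (\<alpha> s - \<alpha> i + a' i) = val (\<alpha> s - \<alpha> i)"
      using vstrict[OF V ne, of "a' i"] ai'v gamma(2) le by auto
    have eq: "a' s = \<alpha> s - \<alpha> i + a' i" unfolding a'_def by (simp add: algebra_simps)
    have ge: "val (\<alpha> s - \<alpha> i) \<ge> val (\<alpha> i)"
      using vult[OF V as, of "- \<alpha> i"] ai ne vneg[OF V ai] h by simp
    show "- val (a' i) = - \<gamma> \<and> - \<gamma> < - val (a' s) \<and>
         - val (a' s) = - val (\<alpha> s - \<alpha> i) \<and> - val (\<alpha> s - \<alpha> i) \<le> - val (\<alpha> i)"
      using ai'v st eq le gamma(2) ge by simp
  qed
  show ?thesis unfolding Let_def a'_def[symmetric] using part1 part3 part4 by auto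
qed

end
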